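(* Let $l,r>1$ and $p_1,\dots,p_q>1$ be integers, $n=l\,p_1\cdots p_q\, r$, and $A\in\{0,1\}^{n\times n}$. Then $A$ admits all of the factorizations \[ (l,\;p_1p_2\cdots p_q r),\quad (p_1 l,\;p_2\cdots p_q r),\quad\dots,\quad (p_1p_2\cdots p_q l,\; r) \] (i.e. the $(p_1\cdots p_k l,\; p_{k+1}\cdots p_q r)$ factorization for every $k=0,\dots,q$) if and only if $A$ admits an $(l,p_1,p_2,\dots,p_q,r)$ factorization.
   Context: Kronecker products of binary matrices use Boolean arithmetic ($1+1=1$). For positive integers $n_1,\dots,n_m$ with $\prod n_i=n$, an $(n_1,\dots,n_m)$ factorization of $A\in\{0,1\}^{n\times n}$ is an expression $A=A_1\otimes\cdots\otimes A_m$ with $A_i\in\{0,1\}^{n_i\times n_i}$. *)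

theory Defs
  imports Main
begin

text \<open>Binary matrices are modelled as functions nat => nat => bool; an n x n binary
matrix is such a function of which only the entries with indices < n matter.
Entry True = 1, False = 0.\<close>

type_synonym bmat = "nat \<Rightarrow> nat \<Rightarrow> bool"

text \<open>Boolean Kronecker product of an a x a matrix A with a b x b matrix B
(row/column index of the product: i = i1 * b + i2). Boolean arithmetic:
product of entries is conjunction.\<close>
definition bkron :: "nat \<Rightarrow> bmat \<Rightarrow> bmat \<Rightarrow> bmat" where
  "bkron b A B = (\<lambda>i j. A (i div b) (j div b) \<and> B (i mod b) (j mod b))"

fun bkron_list :: "(nat \<times> bmat) list \<Rightarrow> bmat" where
  "bkron_list [] = (\<lambda>i j. True)"
| "bkron_list ((s, M) # rest) = bkron (prod_list (map fst rest)) M (bkron_list rest)"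

definition has_factorization :: "bmat \<Rightarrow> nat list \<Rightarrow> bool" where
  "has_factorization A ns =
     (\<exists>Ms :: bmat list. length Ms = length ns \<and>
        (\<forall>i < prod_list ns. \<forall>j < prod_list ns. A i j = bkron_list (zip ns Ms) i j))"

end

theory Submission
  imports Defs
begin

lemma map_fst_zip_len: "length Ms = length ns \<Longrightarrow> map fst (zip ns Ms) = ns"
  by simp

lemma kron_append:
  assumes "length Mx = length xs" "length My = length ys"
    and "i < prod_list xs * prod_list ys" "j < prod_list xs * prod_list ys"
  shows "bkron_list (zip (xs@ys) (Mx@My)) i j =
         bkron (prod_list ys) (bkron_list (zip xs Mx)) (bkron_list (zip ys My)) i j"
  using assms
proof (induction xs arbitrary: Mx i j)
  case Nil
  then show ?case by (simp add: bkron_def)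
next
  case (Cons x xs')
  then obtain M Mx' where Mx: "Mx = M # Mx'" and len: "length Mx' = length xs'"
    by (cases Mx) auto
  define P where "P = prod_list xs'"
  define Q where "Q = prod_list ys"
  have "prod_list xs' * prod_list ys \<noteq> 0"
  proof
    assume "prod_list xs' * prod_list ys = 0"
    then show False using Cons.prems(3) by (metis mult_0_right less_nat_zero_code prod_list.Cons mult.assoc)
  qed
  then have pos: "P * Q > 0" unfolding P_def Q_def by simp
  have Qp: "Q > 0" using pos by simp
  have i1: "i mod (P*Q) < prod_list xs' * prod_list ys" using pos P_def Q_def by simp
  have j1: "j mod (P*Q) < prod_list xs' * prod_list ys" using pos P_def Q_def by simp
  have mf: "map fst (zip (xs' @ ys) (Mx' @ My)) = xs' @ ys" using len Cons.prems by simp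
  have mf2: "map fst (zip xs' Mx') = xs'" using len by simp
  have e1: "\<And>i. i div (P*Q) = i div Q div P"
    by (simp add: mult.commute[of P Q] div_mult2_eq)
  have e2: "\<And>i. (i mod (P*Q)) div Q = (i div Q) mod P"
    using Qp by (simp add: mult.commute[of P Q] mod_mult2_eq)
  have e3: "\<And>i. (i mod (P*Q)) mod Q = i mod Q"
    by (simp add: mod_mod_cancel)
  show ?case
    using Cons.IH[OF len Cons.prems(2) i1 j1] Mx mf mf2
    by (simp add: bkron_def P_def[symmetric] Q_def[symmetric] e1 e2 e3)
qed

lemma hf2:
  "has_factorization A [a, b] \<longleftrightarrow>
   (\<exists>B C. \<forall>i < a*b. \<forall>j < a*b. A i j = (B (i div b) (j div b) \<and> C (i mod b) (j mod b)))"
proof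
  assume "has_factorization A [a, b]"
  then obtain Ms where l2: "length Ms = length [a,b]" and h: "\<forall>i < prod_list [a,b]. \<forall>j < prod_list [a,b]. A i j = bkron_list (zip [a,b] Ms) i j"
    unfolding has_factorization_def by blast
  from l2 obtain B C where "Ms = [B, C]"
    by (auto simp: length_Suc_conv)
  then show "\<exists>B C. \<forall>i < a*b. \<forall>j < a*b. A i j = (B (i div b) (j div b) \<and> C (i mod b) (j mod b))"
    using h by (auto simp: bkron_def)
next
  assume "\<exists>B C. \<forall>i < a*b. \<forall>j < a*b. A i j = (B (i div b) (j div b) \<and> C (i mod b) (j mod b))"
  then obtain B C where h: "\<forall>i < a*b. \<forall>j < a*b. A i j = (B (i div b) (j div b) \<and> C (i mod b) (j mod b))"
    by blast
  show "has_factorization A [a, b]"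
    unfolding has_factorization_def
    by (rule exI[of _ "[B, C]"]) (use h in \<open>auto simp: bkron_def\<close>)
qed

lemma hf_cons:
  assumes h: "\<forall>i < a * prod_list rest. \<forall>j < a * prod_list rest.
      A i j = (B (i div prod_list rest) (j div prod_list rest) \<and> C (i mod prod_list rest) (j mod prod_list rest))"
    and hc: "has_factorization C rest"
  shows "has_factorization A (a # rest)"
proof -
  obtain Ms where len: "length Ms = length rest"
    and hm: "\<forall>i < prod_list rest. \<forall>j < prod_list rest. C i j = bkron_list (zip rest Ms) i j"
    using hc unfolding has_factorization_def by auto
  have mf: "map fst (zip rest Ms) = rest" using len by simp
  show ?thesis
    unfolding has_factorization_def
  proof (intro exI[of _ "B # Ms"] conjI allI impI)
    show "length (B # Ms) = length (a # rest)" using len by simp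
    fix i j assume i: "i < prod_list (a # rest)" and j: "j < prod_list (a # rest)"
    then have p: "prod_list rest > 0" by (cases "prod_list rest = 0") auto
    show "A i j = bkron_list (zip (a # rest) (B # Ms)) i j"
      using h i j hm p mf by (simp add: bkron_def)
  qed
qed

lemma main_lemma:
  "ns \<noteq> [] \<Longrightarrow>
   (\<forall>k. 0 < k \<and> k < length ns \<longrightarrow> has_factorization A [prod_list (take k ns), prod_list (drop k ns)]) \<Longrightarrow>
   has_factorization A ns"
proof (induction ns arbitrary: A)
  case Nil
  then show ?case by simp
next
  case (Cons a rest)
  show ?case
  proof (cases "rest = []")
    case True
    show ?thesis unfolding has_factorization_def True
      by (rule exI[of _ "[A]"]) (simp add: bkron_def)
  next
    case False
    define p where "p = prod_list rest"
    from Cons.prems(2)[rule_format, of 1] False have "has_factorization A [a, p]"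
      by (simp add: p_def)
    then obtain B C where hBC: "\<forall>i<a*p. \<forall>j<a*p. A i j = (B (i div p) (j div p) \<and> C (i mod p) (j mod p))"
      by (auto simp: hf2)
    show ?thesis
    proof (cases "\<exists>u<a. \<exists>v<a. B u v")
      case nB: False
      have z: "has_factorization (\<lambda>_ _. False) rest"
        by (rule Cons.IH[OF False]) (auto simp: hf2)
      show ?thesis
      proof (rule hf_cons[OF _ z], intro allI impI)
        fix i j assume i: "i < a * prod_list rest" and j: "j < a * prod_list rest"
        then have "i div p < a" "j div p < a" by (auto simp: p_def less_mult_imp_div_less)
        then show "A i j = (B (i div prod_list rest) (j div prod_list rest) \<and> False)"
          using hBC i j nB by (auto simp: p_def)
      qed
    next
      case True
      then obtain u v where u: "u < a" and v: "v < a" and Buv: "B u v" by blast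
      define C' where "C' = (\<lambda>x y. A (u*p + x) (v*p + y))"
      have bnd: "\<And>x. x < p \<Longrightarrow> u*p + x < a*p" "\<And>y. y < p \<Longrightarrow> v*p + y < a*p"
      proof -
        fix x assume "x < p"
        then have "u*p + x < (u+1)*p" by simp
        also have "\<dots> \<le> a*p" using u by (intro mult_right_mono) auto
        finally show "u*p + x < a*p" .
      next
        fix y assume "y < p"
        then have "v*p + y < (v+1)*p" by simp
        also have "\<dots> \<le> a*p" using v by (intro mult_right_mono) auto
        finally show "v*p + y < a*p" .
      qed
      have CC: "C x y = C' x y" if "x < p" "y < p" for x y
        using hBC[rule_format, OF bnd(1)[OF that(1)] bnd(2)[OF that(2)]] that Buv
        by (simp add: C'_def)
      have hC': "has_factorization C' rest"
      proof (rule Cons.IH[OF False], intro allI impI)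
        fix k assume k: "0 < k \<and> k < length rest"
        define m where "m = prod_list (take k rest)"
        define e where "e = prod_list (drop k rest)"
        have pme: "p = m * e" unfolding p_def m_def e_def
          by (metis append_take_drop_id prod_list.append)
        from Cons.prems(2)[rule_format, of "Suc k"] k have "has_factorization A [a*m, e]"
          by (simp add: m_def e_def)
        then obtain D E where hDE: "\<forall>i<a*m*e. \<forall>j<a*m*e. A i j = (D (i div e) (j div e) \<and> E (i mod e) (j mod e))"
          by (auto simp: hf2)
        have "\<forall>x<m*e. \<forall>y<m*e. C' x y = (D (u*m + x div e) (v*m + y div e) \<and> E (x mod e) (y mod e))"
        proof (intro allI impI)
          fix x y assume x: "x < m*e" and y: "y < m*e"
          then have ep: "e > 0" by (cases "e = 0") auto
          have xu: "u*p + x = x + (u*m)*e" "v*p + y = y + (v*m)*e" by (simp_all add: pme algebra_simps)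
          have i1: "u*p + x < a*m*e" "v*p + y < a*m*e"
            using bnd x y by (simp_all add: pme mult.assoc)
          show "C' x y = (D (u*m + x div e) (v*m + y div e) \<and> E (x mod e) (y mod e))"
            using hDE[rule_format, OF i1] ep unfolding C'_def xu by simp
        qed
        then show "has_factorization C' [prod_list (take k rest), prod_list (drop k rest)]"
          unfolding m_def[symmetric] e_def[symmetric] hf2
          by (intro exI[of _ "\<lambda>s t. D (u*m+s) (v*m+t)"] exI[of _ E]) simp
      qed
      show ?thesis
      proof (rule hf_cons[OF _ hC'], intro allI impI)
        fix i j assume i: "i < a * prod_list rest" and j: "j < a * prod_list rest"
        then have "p > 0" by (cases "p = 0") (auto simp: p_def)
        then show "A i j = (B (i div prod_list rest) (j div prod_list rest) \<and> C' (i mod prod_list rest) (j mod prod_list rest))"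
          using hBC i j CC by (simp add: p_def)
      qed
    qed
  qed
qed

lemma group_lemma:
  assumes "has_factorization A (xs @ ys)"
  shows "has_factorization A [prod_list xs, prod_list ys]"
proof -
  obtain Ms where len: "length Ms = length (xs @ ys)"
    and h: "\<forall>i < prod_list (xs @ ys). \<forall>j < prod_list (xs @ ys). A i j = bkron_list (zip (xs @ ys) Ms) i j"
    using assms unfolding has_factorization_def by blast
  define Mx where "Mx = take (length xs) Ms"
  define My where "My = drop (length xs) Ms"
  have Ms: "Ms = Mx @ My" unfolding Mx_def My_def by simp
  have lx: "length Mx = length xs" and ly: "length My = length ys"
    using len unfolding Mx_def My_def by auto
  show ?thesis
    unfolding hf2
  proof (rule exI[of _ "bkron_list (zip xs Mx)"], rule exI[of _ "bkron_list (zip ys My)"], intro allI impI)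
    fix i j assume i: "i < prod_list xs * prod_list ys" and j: "j < prod_list xs * prod_list ys"
    show "A i j = (bkron_list (zip xs Mx) (i div prod_list ys) (j div prod_list ys) \<and>
                   bkron_list (zip ys My) (i mod prod_list ys) (j mod prod_list ys))"
      using h i j kron_append[OF lx ly i j] unfolding Ms by (simp add: bkron_def)
  qed
qed

theorem corollary2:
  fixes l r :: nat and ps :: "nat list" and A :: bmat
  assumes "l > 1" and "r > 1" and "ps \<noteq> []" and "\<forall>p \<in> set ps. p > 1"
  shows "(\<forall>k \<le> length ps.
            has_factorization A [prod_list (take k ps) * l, prod_list (drop k ps) * r])
         \<longleftrightarrow> has_factorization A ([l] @ ps @ [r])"
proof
  assume H: "\<forall>k \<le> length ps.
            has_factorization A [prod_list (take k ps) * l, prod_list (drop k ps) * r]"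
  show "has_factorization A ([l] @ ps @ [r])"
  proof (rule main_lemma, simp, intro allI impI)
    fix k assume k: "0 < k \<and> k < length ([l] @ ps @ [r])"
    then obtain k' where kk: "k = Suc k'" and k': "k' \<le> length ps"
      by (cases k) auto
    have "has_factorization A [prod_list (take k' ps) * l, prod_list (drop k' ps) * r]"
      using H k' by blast
    then show "has_factorization A [prod_list (take k ([l] @ ps @ [r])), prod_list (drop k ([l] @ ps @ [r]))]"
      using k' by (simp add: kk mult.commute)
  qed
next
  assume H: "has_factorization A ([l] @ ps @ [r])"
  show "\<forall>k \<le> length ps.
            has_factorization A [prod_list (take k ps) * l, prod_list (drop k ps) * r]"
  proof (intro allI impI)
    fix k assume k: "k \<le> length ps"
    have "[l] @ ps @ [r] = (l # take k ps) @ (drop k ps @ [r])" by simp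
    then have "has_factorization A [prod_list (l # take k ps), prod_list (drop k ps @ [r])]"
      using H group_lemma by metis
    then show "has_factorization A [prod_list (take k ps) * l, prod_list (drop k ps) * r]"
      by (simp add: mult.commute)
  qed
qed

end
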